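(* Let $\Gamma$ be a gain operator on $\ell^\infty_+(\mathcal I)$ and suppose that for some $\rho\in\mathcal K_\infty$: (i) the set $\Psi(\Gamma_\rho)$ is cofinal; (ii) $\Gamma_\rho$ satisfies the uniform NJI condition; (iii) there is $M>0$ with $|\mathcal I_i|\le M$ for all $i\in\mathcal I$. Then there exists $\rho'\in\mathcal K_\infty$ such that $\Sigma(\Gamma_{\rho'})$ is GATT.
   Context: Let $\mathcal I$ be a nonempty countable index set; $\ell^\infty_+(\mathcal I)$ is the cone of nonnegative real families $s=(s_i)_{i\in\mathcal I}$ with $\|s\|:=\sup_i|s_i|<\infty$, ordered componentwise. $\mathcal K_\infty$: continuous strictly increasing unbounded $\gamma:\mathbb R_+\to\mathbb R_+$ with $\gamma(0)=0$; such functions act on $\ell^\infty_+(\mathcal I)$ componentwise. For $\mathcal J\subset\mathcal I$, $s_{|\mathcal J}$ agrees with $s$ on $\mathcal J$ and is $0$ elsewhere. Gain operator: for each $i$ a finite (possibly empty) $\mathcal I_i\subset\mathcal I\setminus\{i\}$; directed graph $\mathcal G$ with vertices $\mathcal I$ and edges $ji$, $j\in\mathcal I_i$; a pointwise equicontinuous family $\gamma_{ij}\in\mathcal K_\infty$ ($ji\in E(\mathcal G)$); functions $\mu_i:\ell^\infty_+(\mathcal I)\to[0,\infty]$ with (M1) some $\xi\in\mathcal K_\infty$ has $\mu_i(0)=0$, $\mu_i(s)\ge\xi(\|s\|)$; (M2) $\mu_i$ monotone; (M3) for each finite $\mathcal J$, $\mu_i$ restricted to vectors vanishing off $\mathcal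 J$ is finite-valued and continuous; (M4) for each norm-bounded $A$ and $\varepsilon>0$ there is $\delta>0$ with $\sup_i|\mu_i(s_{|\mathcal I_i})-\mu_i(s^0_{|\mathcal I_i})|\le\varepsilon$ whenever $s^0\in A$, $\|s-s^0\|\le\delta$. $\Gamma_i(s):=\mu_i([\gamma_{ij}(s_j)]_{j\in\mathcal I_i})$ (argument zero outside $\mathcal I_i$). For $\rho\in\mathcal K_\infty$, $\Gamma_\rho:=(\mathrm{id}+\rho)\circ\Gamma$. $\mathcal N^-_i(n)$: vertices $j$ with a directed path from $j$ to $i$ of length at most $n$ ($\mathcal N^-_i(0)=\{i\}$). For a monotone $T$, $\Psi(T):=\{s:T(s)\le s\}$; $\Sigma(T)$ is the system $s^{n+1}=T(s^n)$, GATT if $\|T^n(s)\|\to0$ for all $s$. A set $A$ is cofinal if every $s\in\ell^\infty_+(\mathcal I)$ has some $\hat s\in A$ with $s\le\hat s$. $T$ satisfies the uniform NJI condition if for all $r,\varepsilon>0$ there are $n\in\mathbb N$, $\delta>0$ such that for all $s\in\ell^\infty_+(\mathcal I)$, $i$ with $s_i\ge\varepsilon$, $\|s\|\le r$ there is $j\in\mathcal N^-_i(n)$ with $s_j\ge\delta$ and $T_j(s)<s_j$. *)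

theory Defs
  imports "HOL-Analysis.Analysis"
begin

text \<open>Sequences s = (s_i) over a countable index type 'i are modelled as
  functions 'i => real.  The cone l^infty_+(I):\<close>
definition linf_pos :: "('i \<Rightarrow> real) set" where
  "linf_pos = {s. (\<forall>i. 0 \<le> s i) \<and> bdd_above (range (\<lambda>i. \<bar>s i\<bar>))}"

definition supn :: "('i \<Rightarrow> real) \<Rightarrow> real" where
  "supn s = (SUP i. \<bar>s i\<bar>)"

definition restr :: "('i \<Rightarrow> real) \<Rightarrow> 'i set \<Rightarrow> ('i \<Rightarrow> real)" where
  "restr s J = (\<lambda>j. if j \<in> J then s j else 0)"

text \<open>Class K_infinity (functions on R_+; values off R_+ are irrelevant).\<close>
definition Kinf :: "(real \<Rightarrow> real) \<Rightarrow> bool" where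
  "Kinf g \<longleftrightarrow> continuous_on {0..} g \<and> strict_mono_on {0..} g \<and> g 0 = 0
              \<and> (\<forall>M. \<exists>x\<ge>0. M < g x)"

text \<open>Gain operator data: neighbour sets Ii i (edges j -> i for j in Ii i),
  gains gam i j = gamma_ij, aggregation functions mu i = mu_i with values in [0,infty].\<close>
definition gain_operator ::
  "('i \<Rightarrow> 'i set) \<Rightarrow> ('i \<Rightarrow> 'i \<Rightarrow> real \<Rightarrow> real) \<Rightarrow> ('i \<Rightarrow> ('i \<Rightarrow> real) \<Rightarrow> ereal) \<Rightarrow> bool" where
  "gain_operator Ii gam mu \<longleftrightarrow>
     (\<forall>i. finite (Ii i) \<and> i \<notin> Ii i) \<and>
     (\<forall>i. \<forall>j\<in>Ii i. Kinf (gam i j)) \<and>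
     \<comment> \<open>pointwise equicontinuity of the family gamma_ij\<close>
     (\<forall>x\<ge>0. \<forall>\<epsilon>>0. \<exists>\<delta>>0. \<forall>i. \<forall>j\<in>Ii i. \<forall>y\<ge>0.
         \<bar>x - y\<bar> < \<delta> \<longrightarrow> \<bar>gam i j x - gam i j y\<bar> < \<epsilon>) \<and>
     \<comment> \<open>(M1)\<close>
     (\<exists>\<xi>. Kinf \<xi> \<and> (\<forall>i. mu i (\<lambda>_. 0) = 0 \<and>
          (\<forall>s\<in>linf_pos. ereal (\<xi> (supn s)) \<le> mu i s))) \<and>
     \<comment> \<open>(M2)\<close>
     (\<forall>i. \<forall>s\<in>linf_pos. \<forall>t\<in>linf_pos. (\<forall>k. s k \<le> t k) \<longrightarrow> mu i s \<le> mu i t) \<and>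
     \<comment> \<open>(M3)\<close>
     (\<forall>i J. finite J \<longrightarrow>
        (\<forall>s\<in>linf_pos. (\<forall>k. k \<notin> J \<longrightarrow> s k = 0) \<longrightarrow>
           mu i s \<noteq> \<infinity> \<and>
           (\<forall>\<epsilon>>0. \<exists>\<delta>>0. \<forall>t\<in>linf_pos. (\<forall>k. k \<notin> J \<longrightarrow> t k = 0) \<longrightarrow>
               supn (\<lambda>k. t k - s k) < \<delta> \<longrightarrow>
               \<bar>real_of_ereal (mu i t) - real_of_ereal (mu i s)\<bar> < \<epsilon>))) \<and>
     \<comment> \<open>(M4), norm-bounded sets A taken as balls of radius r\<close>
     (\<forall>r \<epsilon>. 0 < r \<longrightarrow> 0 < \<epsilon> \<longrightarrow> (\<exists>\<delta>>0. \<forall>s0\<in>linf_pos. \<forall>s\<in>linf_pos.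
         supn s0 \<le> r \<longrightarrow> supn (\<lambda>k. s k - s0 k) \<le> \<delta> \<longrightarrow>
         (\<forall>i. \<bar>real_of_ereal (mu i (restr s (Ii i))) - real_of_ereal (mu i (restr s0 (Ii i)))\<bar> \<le> \<epsilon>)))"

definition Gam :: "('i \<Rightarrow> 'i set) \<Rightarrow> ('i \<Rightarrow> 'i \<Rightarrow> real \<Rightarrow> real) \<Rightarrow> ('i \<Rightarrow> ('i \<Rightarrow> real) \<Rightarrow> ereal)
                    \<Rightarrow> ('i \<Rightarrow> real) \<Rightarrow> ('i \<Rightarrow> real)" where
  "Gam Ii gam mu s = (\<lambda>i. real_of_ereal (mu i (\<lambda>j. if j \<in> Ii i then gam i j (s j) else 0)))"

definition Gam_rho :: "(real \<Rightarrow> real) \<Rightarrow> ('i \<Rightarrow> 'i set) \<Rightarrow> ('i \<Rightarrow> 'i \<Rightarrow> real \<Rightarrow> real)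
                    \<Rightarrow> ('i \<Rightarrow> ('i \<Rightarrow> real) \<Rightarrow> ereal) \<Rightarrow> ('i \<Rightarrow> real) \<Rightarrow> ('i \<Rightarrow> real)" where
  "Gam_rho \<rho> Ii gam mu s = (\<lambda>i. Gam Ii gam mu s i + \<rho> (Gam Ii gam mu s i))"

definition Nminus :: "('i \<Rightarrow> 'i set) \<Rightarrow> 'i \<Rightarrow> nat \<Rightarrow> 'i set" where
  "Nminus Ii i n = {j. \<exists>k\<le>n. (j, i) \<in> {(a, b). a \<in> Ii b} ^^ k}"

definition Psi :: "(('i \<Rightarrow> real) \<Rightarrow> ('i \<Rightarrow> real)) \<Rightarrow> ('i \<Rightarrow> real) set" where
  "Psi T = {s\<in>linf_pos. \<forall>i. T s i \<le> s i}"

definition cofinal_set :: "('i \<Rightarrow> real) set \<Rightarrow> bool" where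
  "cofinal_set A \<longleftrightarrow> (\<forall>s\<in>linf_pos. \<exists>t\<in>A. \<forall>i. s i \<le> t i)"

definition GATT :: "(('i \<Rightarrow> real) \<Rightarrow> ('i \<Rightarrow> real)) \<Rightarrow> bool" where
  "GATT T \<longleftrightarrow> (\<forall>s\<in>linf_pos. (\<lambda>n. supn ((T ^^ n) s)) \<longlonglongrightarrow> 0)"

definition uniform_NJI :: "('i \<Rightarrow> 'i set) \<Rightarrow> (('i \<Rightarrow> real) \<Rightarrow> ('i \<Rightarrow> real)) \<Rightarrow> bool" where
  "uniform_NJI Ii T \<longleftrightarrow> (\<forall>r>0. \<forall>\<epsilon>>0. \<exists>n::nat. \<exists>\<delta>>0. \<forall>s\<in>linf_pos. \<forall>i.
      s i \<ge> \<epsilon> \<longrightarrow> supn s \<le> r \<longrightarrow>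
      (\<exists>j\<in>Nminus Ii i n. s j \<ge> \<delta> \<and> T s j < s j))"

end

theory Submission
  imports Defs
begin
lemma Kinf_nonneg: "Kinf g \<Longrightarrow> 0 \<le> x \<Longrightarrow> 0 \<le> g x"
  unfolding Kinf_def strict_mono_on_def
  by (metis atLeast_iff order.order_iff_strict order_refl)

lemma Kinf_mono: "Kinf g \<Longrightarrow> 0 \<le> x \<Longrightarrow> x \<le> y \<Longrightarrow> g x \<le> g y"
  unfolding Kinf_def strict_mono_on_def
  by (metis atLeast_iff order.order_iff_strict order_trans)

lemma Kinf_half: "Kinf \<rho> \<Longrightarrow> Kinf (\<lambda>x. \<rho> x / 2)"
  unfolding Kinf_def strict_mono_on_def
proof (intro conjI allI impI)
  assume A: "continuous_on {0..} \<rho> \<and> (\<forall>r s. r \<in> {0..} \<and> s \<in> {0..} \<and> r < s \<longrightarrow> \<rho> r < \<rho> s) \<and> \<rho> 0 = 0 \<and> (\<forall>M. \<exists>x\<ge>0. M < \<rho> x)"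
  show "continuous_on {0..} (\<lambda>x. \<rho> x / 2)" using A by (intro continuous_intros) auto
  show "\<And>r s. r \<in> {0..} \<and> s \<in> {0..} \<and> r < s \<Longrightarrow> \<rho> r / 2 < \<rho> s / 2" using A by auto
  show "\<rho> 0 / 2 = 0" using A by auto
  fix M :: real
  obtain x where "x \<ge> 0" "2*M < \<rho> x" using A by blast
  then show "\<exists>x\<ge>0. M < \<rho> x / 2" by auto
qed

lemma supn_upper: "x \<in> linf_pos \<Longrightarrow> \<bar>x i\<bar> \<le> supn x"
  unfolding linf_pos_def supn_def by (auto intro: cSUP_upper)

lemma supn_nonneg: "x \<in> linf_pos \<Longrightarrow> 0 \<le> supn x"
  using supn_upper[of x undefined] by linarith

lemma supn_le: "(\<And>i. \<bar>x i\<bar> \<le> c) \<Longrightarrow> supn x \<le> c"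
  unfolding supn_def by (rule cSUP_least) auto

lemma supn_mono: "(\<And>i. 0 \<le> x i) \<Longrightarrow> (\<And>i. x i \<le> y i) \<Longrightarrow> y \<in> linf_pos \<Longrightarrow> supn x \<le> supn y"
  by (rule supn_le) (metis abs_of_nonneg order_trans supn_upper)

lemma count_drop:
  fixes v :: "nat \<Rightarrow> 'i \<Rightarrow> real" and S :: "'i set"
  assumes fin: "finite S" and nn: "\<forall>m j. 0 \<le> v m j"
    and dec: "\<forall>m j. v (Suc m) j \<le> v m j" and bd: "\<forall>j. v 0 j \<le> r"
    and drop: "\<forall>m<N. \<exists>j\<in>S. v (Suc m) j \<le> v m j - \<eta>"
  shows "real N * \<eta> \<le> real (card S) * r"
proof -
  define P where "P m = sum (v m) S" for m
  have step: "P (Suc m) \<le> P m - \<eta>" if mN: "m < N" for m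
  proof -
    obtain j where j: "j\<in>S" "v (Suc m) j \<le> v m j - \<eta>" using drop mN by blast
    have e1: "P (Suc m) = v (Suc m) j + sum (v (Suc m)) (S - {j})"
      using sum.remove[OF fin j(1)] P_def by simp
    have e2: "P m = v m j + sum (v m) (S - {j})"
      using sum.remove[OF fin j(1)] P_def by simp
    have "sum (v (Suc m)) (S - {j}) \<le> sum (v m) (S - {j})"
      by (rule sum_mono) (use dec in auto)
    then show ?thesis using e1 e2 j(2) by linarith
  qed
  have ind: "P m \<le> P 0 - real m * \<eta>" if "m \<le> N" for m
    using that
  proof (induction m)
    case 0 show ?case by simp
  next
    case (Suc m)
    then have "P (Suc m) \<le> P m - \<eta>" using step by simp
    with Suc show ?case by (simp add: algebra_simps)
  qed
  have "P 0 \<le> real (card S) * r" unfolding P_def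
    using sum_bounded_above[of S "v 0" r] bd by simp
  moreover have "0 \<le> P N" unfolding P_def using nn by (simp add: sum_nonneg)
  ultimately show ?thesis using ind[of N] by linarith
qed

lemma Nminus_bound:
  assumes "\<forall>i. finite (Ii i) \<and> card (Ii i) \<le> D"
  shows "\<exists>C. \<forall>i. finite (Nminus Ii i n) \<and> card (Nminus Ii i n) \<le> C"
proof (induction n)
  case 0
  have "Nminus Ii i 0 = {i}" for i unfolding Nminus_def by auto
  then show ?case by auto
next
  case (Suc n)
  then obtain C where C: "\<forall>i. finite (Nminus Ii i n) \<and> card (Nminus Ii i n) \<le> C" by blast
  have sub: "Nminus Ii i (Suc n) \<subseteq> {i} \<union> (\<Union>m\<in>Ii i. Nminus Ii m n)" for i
  proof
    fix j assume "j \<in> Nminus Ii i (Suc n)"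
    then obtain k where k: "k \<le> Suc n" "(j, i) \<in> {(a, b). a \<in> Ii b} ^^ k"
      unfolding Nminus_def by blast
    show "j \<in> {i} \<union> (\<Union>m\<in>Ii i. Nminus Ii m n)"
    proof (cases k)
      case 0 then show ?thesis using k by simp
    next
      case (Suc k')
      with k obtain m where "(j, m) \<in> {(a, b). a \<in> Ii b} ^^ k'" "(m, i) \<in> {(a, b). a \<in> Ii b}"
        by (auto elim: relpow_Suc_E)
      moreover have "k' \<le> n" using k Suc by simp
      ultimately show ?thesis unfolding Nminus_def by blast
    qed
  qed
  have "finite (Nminus Ii i (Suc n)) \<and> card (Nminus Ii i (Suc n)) \<le> 1 + D * C" for i
  proof -
    have fin: "finite ({i} \<union> (\<Union>m\<in>Ii i. Nminus Ii m n))" using assms C by auto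
    have "card ({i} \<union> (\<Union>m\<in>Ii i. Nminus Ii m n)) \<le> 1 + card (\<Union>m\<in>Ii i. Nminus Ii m n)"
      using card_Un_le[of "{i}" "\<Union>m\<in>Ii i. Nminus Ii m n"] by simp
    also have "card (\<Union>m\<in>Ii i. Nminus Ii m n) \<le> (\<Sum>m\<in>Ii i. card (Nminus Ii m n))"
      using assms card_UN_le by blast
    also have "\<dots> \<le> card (Ii i) * C" using sum_bounded_above[of "Ii i" "\<lambda>m. card (Nminus Ii m n)" C] C
      by simp
    also have "\<dots> \<le> D * C" using assms by simp
    finally have "card ({i} \<union> (\<Union>m\<in>Ii i. Nminus Ii m n)) \<le> 1 + D * C" by simp
    moreover have "card (Nminus Ii i (Suc n)) \<le> card ({i} \<union> (\<Union>m\<in>Ii i. Nminus Ii m n))"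
      using card_mono[OF fin sub] .
    ultimately show ?thesis using finite_subset[OF sub fin] by linarith
  qed
  then show ?case by blast
qed

theorem proposition2p20:
  fixes Ii :: "'i::countable \<Rightarrow> 'i set"
    and gam :: "'i \<Rightarrow> 'i \<Rightarrow> real \<Rightarrow> real"
    and mu :: "'i \<Rightarrow> ('i \<Rightarrow> real) \<Rightarrow> ereal"
    and \<rho> :: "real \<Rightarrow> real"
    and M :: real
  assumes "gain_operator Ii gam mu"
    and "Kinf \<rho>"
    and "cofinal_set (Psi (Gam_rho \<rho> Ii gam mu))"
    and "uniform_NJI Ii (Gam_rho \<rho> Ii gam mu)"
    and "M > 0" and "\<forall>i. real (card (Ii i)) \<le> M"
  shows "\<exists>\<rho>'. Kinf \<rho>' \<and> GATT (Gam_rho \<rho>' Ii gam mu)"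
proof -
  note G = assms(1)[unfolded gain_operator_def]
  have P1: "\<forall>i. finite (Ii i) \<and> i \<notin> Ii i" using G[THEN conjunct1] .
  have P2: "\<forall>i. \<forall>j\<in>Ii i. Kinf (gam i j)" using G[THEN conjunct2, THEN conjunct1] .
  have P4: "\<exists>\<xi>. Kinf \<xi> \<and> (\<forall>i. mu i (\<lambda>_. 0) = 0 \<and>
          (\<forall>s\<in>linf_pos. ereal (\<xi> (supn s)) \<le> mu i s))"
    using G[THEN conjunct2, THEN conjunct2, THEN conjunct2, THEN conjunct1] .
  have M2: "\<forall>i. \<forall>s\<in>linf_pos. \<forall>t\<in>linf_pos. (\<forall>k. s k \<le> t k) \<longrightarrow> mu i s \<le> mu i t"
    using G[THEN conjunct2, THEN conjunct2, THEN conjunct2, THEN conjunct2, THEN conjunct1] .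
  have P6: "(\<forall>i J. finite J \<longrightarrow>
        (\<forall>s\<in>linf_pos. (\<forall>k. k \<notin> J \<longrightarrow> s k = 0) \<longrightarrow>
           mu i s \<noteq> \<infinity> \<and>
           (\<forall>\<epsilon>>0. \<exists>\<delta>>0. \<forall>t\<in>linf_pos. (\<forall>k. k \<notin> J \<longrightarrow> t k = 0) \<longrightarrow>
               supn (\<lambda>k. t k - s k) < \<delta> \<longrightarrow>
               \<bar>real_of_ereal (mu i t) - real_of_ereal (mu i s)\<bar> < \<epsilon>)))"
    using G[THEN conjunct2, THEN conjunct2, THEN conjunct2, THEN conjunct2, THEN conjunct2, THEN conjunct1] .
  have fin: "\<forall>i. finite (Ii i)" using P1 by blast
  have gK: "\<forall>i. \<forall>j\<in>Ii i. Kinf (gam i j)" using P2 .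
  obtain \<xi> where xiK: "Kinf \<xi>" and xi: "\<forall>i. \<forall>s\<in>linf_pos. ereal (\<xi> (supn s)) \<le> mu i s"
    using P4 by blast
  have M3: "\<forall>i J. finite J \<longrightarrow> (\<forall>s\<in>linf_pos. (\<forall>k. k \<notin> J \<longrightarrow> s k = 0) \<longrightarrow> mu i s \<noteq> \<infinity>)"
  proof (intro allI impI ballI)
    fix i J s assume "finite (J::'i set)" "s \<in> linf_pos" "\<forall>k. k \<notin> J \<longrightarrow> s k = 0"
    then show "mu i s \<noteq> \<infinity>" using P6 by blast
  qed
  define A where "A s i = (\<lambda>j. if j \<in> Ii i then gam i j (s j) else (0::real))" for s i
  have GamA: "Gam Ii gam mu s i = real_of_ereal (mu i (A s i))" for s i
    by (simp add: Gam_def A_def)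
  have A_lin: "A s i \<in> linf_pos" if s: "s \<in> linf_pos" for s i
  proof -
    have nn: "0 \<le> A s i j" for j
      using s gK Kinf_nonneg unfolding A_def linf_pos_def by auto
    have "range (\<lambda>j. \<bar>A s i j\<bar>) \<subseteq> insert 0 ((\<lambda>j. \<bar>gam i j (s j)\<bar>) ` Ii i)"
      unfolding A_def by auto
    moreover have "bdd_above (insert 0 ((\<lambda>j. \<bar>gam i j (s j)\<bar>) ` Ii i))"
      using fin by (intro bdd_above_finite) auto
    ultimately have "bdd_above (range (\<lambda>j. \<bar>A s i j\<bar>))" by (rule bdd_above_mono[rotated])
    then show ?thesis using nn unfolding linf_pos_def by auto
  qed
  have A_mono: "A s i k \<le> A t i k" if "s \<in> linf_pos" "\<forall>k. s k \<le> t k" for s t i k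
    using that gK Kinf_mono unfolding A_def linf_pos_def by auto
  have mu_nn: "0 \<le> mu i x" if "x \<in> linf_pos" for i x
  proof -
    have "0 \<le> \<xi> (supn x)" using Kinf_nonneg[OF xiK supn_nonneg[OF that]] .
    moreover have "ereal (\<xi> (supn x)) \<le> mu i x" using xi that by blast
    ultimately show ?thesis by (meson ereal_less_eq(5) order_trans)
  qed
  have mu_fin: "mu i (A s i) \<noteq> \<infinity>" if "s \<in> linf_pos" for s i
  proof -
    have "\<forall>k. k \<notin> Ii i \<longrightarrow> A s i k = 0" unfolding A_def by simp
    then show ?thesis using M3 fin A_lin[OF that, of i] by blast
  qed
  have Gam_nn: "0 \<le> Gam Ii gam mu s i" if "s \<in> linf_pos" for s i
    unfolding GamA using mu_nn[OF A_lin[OF that]] by (simp add: real_of_ereal_pos)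
  have Gam_mono: "Gam Ii gam mu s i \<le> Gam Ii gam mu t i"
    if "s \<in> linf_pos" "t \<in> linf_pos" "\<forall>k. s k \<le> t k" for s t i
    unfolding GamA
  proof (rule real_of_ereal_positive_mono)
    show "0 \<le> mu i (A s i)" using mu_nn[OF A_lin[OF that(1)]] .
    show "mu i (A s i) \<le> mu i (A t i)" using M2 A_lin that A_mono by blast
    show "mu i (A t i) \<noteq> \<infinity>" using mu_fin[OF that(2)] .
  qed
  define \<rho>' where "\<rho>' = (\<lambda>x. \<rho> x / 2)"
  have Kr': "Kinf \<rho>'" unfolding \<rho>'_def using Kinf_half[OF assms(2)] .
  define T where "T = Gam_rho \<rho> Ii gam mu"
  define T' where "T' = Gam_rho \<rho>' Ii gam mu"
  have T_eq: "T s i = Gam Ii gam mu s i + \<rho> (Gam Ii gam mu s i)" for s i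
    by (simp add: T_def Gam_rho_def)
  have T'_eq: "T' s i = Gam Ii gam mu s i + \<rho> (Gam Ii gam mu s i) / 2" for s i
    by (simp add: T'_def Gam_rho_def \<rho>'_def)
  have T'_mono: "T' s i \<le> T' t i"
    if "s \<in> linf_pos" "t \<in> linf_pos" "\<forall>k. s k \<le> t k" for s t i
    using Gam_mono[OF that, of i] Kinf_mono[OF assms(2) Gam_nn[OF that(1), of i], of "Gam Ii gam mu t i"]
    unfolding T'_eq by simp
  have T_mono: "T s i \<le> T t i"
    if "s \<in> linf_pos" "t \<in> linf_pos" "\<forall>k. s k \<le> t k" for s t i
    using Gam_mono[OF that, of i] Kinf_mono[OF assms(2) Gam_nn[OF that(1), of i], of "Gam Ii gam mu t i"]
    unfolding T_eq by simp
  have T'_nn: "0 \<le> T' s i" if "s \<in> linf_pos" for s i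
    using Gam_nn[OF that, of i] Kinf_nonneg[OF assms(2) Gam_nn[OF that, of i]] unfolding T'_eq by simp
  have T'_le: "T' s i \<le> T s i" if "s \<in> linf_pos" for s i
    using Kinf_nonneg[OF assms(2) Gam_nn[OF that, of i]] unfolding T'_eq T_eq by simp
  have cof: "\<forall>s\<in>linf_pos. \<exists>t\<in>Psi T. \<forall>i. s i \<le> t i"
    using assms(3) unfolding cofinal_set_def T_def .
  have T'_lin: "T' s \<in> linf_pos" if s: "s \<in> linf_pos" for s
  proof -
    obtain t where t: "t \<in> Psi T" "\<forall>i. s i \<le> t i" using cof s by blast
    have tl: "t \<in> linf_pos" and tT: "\<forall>i. T t i \<le> t i" using t unfolding Psi_def by auto
    have b: "\<bar>T' s i\<bar> \<le> supn t" for i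
    proof -
      have "\<bar>T' s i\<bar> = T' s i" using T'_nn[OF s] by simp
      also have "\<dots> \<le> T s i" using T'_le[OF s] .
      also have "\<dots> \<le> T t i" using T_mono[OF s tl t(2)] .
      also have "\<dots> \<le> t i" using tT by simp
      also have "\<dots> \<le> supn t" using supn_upper[OF tl, of i] by simp
      finally show ?thesis .
    qed
    have "bdd_above (range (\<lambda>i. \<bar>T' s i\<bar>))" using b by (intro bdd_aboveI2) auto
    then show ?thesis using T'_nn[OF s] unfolding linf_pos_def by auto
  qed
  have it_lin: "(T' ^^ n) s \<in> linf_pos" if "s \<in> linf_pos" for s n
    using that by (induction n) (auto intro: T'_lin)
  have it_mono: "\<forall>k. (T' ^^ n) s k \<le> (T' ^^ n) t k"
    if "s \<in> linf_pos" "t \<in> linf_pos" "\<forall>k. s k \<le> t k" for s t n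
  proof (induction n)
    case 0 then show ?case using that by simp
  next
    case (Suc n) then show ?case using T'_mono[OF it_lin[OF that(1)] it_lin[OF that(2)]] by simp
  qed
  have NJI: "\<forall>r>0. \<forall>\<epsilon>>0. \<exists>n::nat. \<exists>\<delta>>0. \<forall>s\<in>linf_pos. \<forall>i.
      s i \<ge> \<epsilon> \<longrightarrow> supn s \<le> r \<longrightarrow> (\<exists>j\<in>Nminus Ii i n. s j \<ge> \<delta> \<and> T s j < s j)"
    using assms(4) unfolding uniform_NJI_def T_def .
  have drop: "\<exists>\<eta>>0. \<forall>s\<in>linf_pos. \<forall>j. s j \<ge> \<delta> \<longrightarrow> T s j < s j \<longrightarrow> T' s j \<le> s j - \<eta>"
    if d: "\<delta> > 0" for \<delta> :: real
  proof -
    have cont: "continuous_on {0..} \<rho>" and r0: "\<rho> 0 = 0"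
      and sm: "strict_mono_on {0..} \<rho>" using assms(2) unfolding Kinf_def by auto
    obtain dd where dd: "dd > 0" "\<forall>x'\<in>{0..}. dist x' 0 < dd \<longrightarrow> dist (\<rho> x') (\<rho> 0) < \<delta>/4"
      using cont[unfolded continuous_on_iff, rule_format, of 0 "\<delta>/4"] d by auto
    define g0 where "g0 = min (dd/2) (\<delta>/8)"
    have g0p: "g0 > 0" using dd d by (simp add: g0_def)
    have "g0 < dd" using dd(1) by (simp add: g0_def)
    then have "dist (\<rho> g0) (\<rho> 0) < \<delta>/4" using dd(2) g0p by (simp add: dist_real_def)
    then have rg0: "\<rho> g0 < \<delta>/4" using r0 by (simp add: dist_real_def)
    define c where "c = \<rho> g0"
    have cp: "c > 0" using sm g0p r0 unfolding c_def strict_mono_on_def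
      by (metis atLeast_iff less_imp_le order_refl)
    define \<eta> where "\<eta> = min (c/2) (\<delta>/2)"
    have "\<forall>s\<in>linf_pos. \<forall>j. s j \<ge> \<delta> \<longrightarrow> T s j < s j \<longrightarrow> T' s j \<le> s j - \<eta>"
    proof (intro ballI allI impI)
      fix s j assume s: "s \<in> linf_pos" and sj: "s j \<ge> \<delta>" and Tsj: "T s j < s j"
      define g where "g = Gam Ii gam mu s j"
      have gnn: "0 \<le> g" using Gam_nn[OF s] g_def by simp
      have e1: "T s j = g + \<rho> g" using T_eq g_def by simp
      have e2: "T' s j = g + \<rho> g / 2" using T'_eq g_def by simp
      show "T' s j \<le> s j - \<eta>"
      proof (cases "g \<ge> g0")
        case True
        then have "\<rho> g \<ge> c" unfolding c_def using Kinf_mono[OF assms(2)] g0p by simp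
        then show ?thesis using e1 e2 Tsj \<eta>_def by simp
      next
        case False
        then have "\<rho> g \<le> c" unfolding c_def using Kinf_mono[OF assms(2) gnn] by simp
        moreover have "g < \<delta>/8" using False g0_def by simp
        ultimately show ?thesis using e2 rg0 sj c_def \<eta>_def
          Kinf_nonneg[OF assms(2) gnn] by simp
      qed
    qed
    moreover have "\<eta> > 0" using cp d \<eta>_def by simp
    ultimately show ?thesis by blast
  qed
  define D where "D = nat \<lceil>M\<rceil>"
  have cardD: "\<forall>i. finite (Ii i) \<and> card (Ii i) \<le> D"
  proof
    fix i
    have "real (card (Ii i)) \<le> of_int \<lceil>M\<rceil>" using assms(6) le_of_int_ceiling order_trans by blast
    then have "card (Ii i) \<le> D" unfolding D_def by linarith
    then show "finite (Ii i) \<and> card (Ii i) \<le> D" using fin by simp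
  qed
  have conv: "(\<lambda>n. supn ((T' ^^ n) t)) \<longlonglongrightarrow> 0" if tP: "t \<in> Psi T" for t
  proof -
    have tl: "t \<in> linf_pos" and tT: "\<forall>i. T t i \<le> t i" using tP unfolding Psi_def by auto
    define v where "v n = (T' ^^ n) t" for n
    have vl: "v n \<in> linf_pos" for n using it_lin[OF tl] v_def by simp
    have vS: "v (Suc n) = T' (v n)" for n by (simp add: v_def)
    have dec: "v (Suc n) k \<le> v n k" for n k
    proof (induction n arbitrary: k)
      case 0
      have "v (Suc 0) k = T' t k" using vS v_def by simp
      also have "\<dots> \<le> T t k" using T'_le[OF tl] .
      also have "\<dots> \<le> t k" using tT by simp
      finally show ?case by (simp add: v_def)
    next
      case (Suc n)
      have "T' (v (Suc n)) k \<le> T' (v n) k" using T'_mono[OF vl vl] Suc by blast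
      then show ?case using vS by simp
    qed
    have vt: "v n k \<le> t k" for n k
    proof (induction n)
      case 0 then show ?case by (simp add: v_def)
    next
      case (Suc n) then show ?case using dec order_trans by blast
    qed
    have vnn: "0 \<le> v n k" for n k using vl unfolding linf_pos_def by auto
    have supv: "supn (v n) \<le> supn t" for n using supn_mono[OF vnn vt tl] .
    have "(\<lambda>n. supn (v n)) \<longlonglongrightarrow> 0"
    proof (rule LIMSEQ_I)
      fix \<epsilon> :: real assume ep: "0 < \<epsilon>"
      define e where "e = \<epsilon>/2"
      define r where "r = supn t + 1"
      have rp: "r > 0" using supn_nonneg[OF tl] r_def by simp
      have ep2: "e > 0" using ep e_def by simp
      obtain n0 \<delta> where dp: "\<delta> > 0" and nj: "\<forall>s\<in>linf_pos. \<forall>i.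
          s i \<ge> e \<longrightarrow> supn s \<le> r \<longrightarrow> (\<exists>j\<in>Nminus Ii i n0. s j \<ge> \<delta> \<and> T s j < s j)"
        using NJI rp ep2 by blast
      obtain \<eta> where etap: "\<eta> > 0" and dr: "\<forall>s\<in>linf_pos. \<forall>j. s j \<ge> \<delta> \<longrightarrow> T s j < s j \<longrightarrow> T' s j \<le> s j - \<eta>"
        using drop[OF dp] by blast
      obtain C where C: "\<forall>i. finite (Nminus Ii i n0) \<and> card (Nminus Ii i n0) \<le> C"
        using Nminus_bound[OF cardD] by blast
      define N where "N = nat \<lceil>real C * r / \<eta>\<rceil> + 1"
      have NN: "real N * \<eta> > real C * r"
      proof -
        have "real N > real C * r / \<eta>" unfolding N_def
          using real_nat_ceiling_ge[of "real C * r / \<eta>"] by simp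
        then show ?thesis using etap by (simp add: field_simps)
      qed
      show "\<exists>no. \<forall>n\<ge>no. norm (supn (v n) - 0) < \<epsilon>"
      proof (intro exI allI impI)
        fix n assume nN: "n \<ge> N"
        have small: "v n i < e" for i
        proof (rule ccontr)
          assume "\<not> v n i < e"
          then have vi: "v n i \<ge> e" by simp
          let ?S = "Nminus Ii i n0"
          have "\<forall>m<n. \<exists>j\<in>?S. v (Suc m) j \<le> v m j - \<eta>"
          proof (intro allI impI)
            fix m assume mn: "m < n"
            have "v n i \<le> v m i" using lift_Suc_antimono_le[of "\<lambda>m. v m i", OF dec] mn by simp
            then have "v m i \<ge> e" using vi by simp
            moreover have "supn (v m) \<le> r" using supv[of m] r_def by simp
            ultimately obtain j where j: "j \<in> ?S" "v m j \<ge> \<delta>" "T (v m) j < v m j"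
              using nj vl by blast
            then have "T' (v m) j \<le> v m j - \<eta>" using dr vl by blast
            then have "v (Suc m) j \<le> v m j - \<eta>" using vS[of m] by simp
            then show "\<exists>j\<in>?S. v (Suc m) j \<le> v m j - \<eta>" using j(1) by blast
          qed
          moreover have "\<forall>j. v 0 j \<le> r"
          proof
            fix j
            have "v 0 j = t j" by (simp add: v_def)
            also have "\<dots> \<le> supn t" using supn_upper[OF tl, of j] by simp
            finally show "v 0 j \<le> r" using r_def by simp
          qed
          ultimately have "real n * \<eta> \<le> real (card ?S) * r"
            using count_drop[of ?S v r n \<eta>] C vnn dec by blast
          also have "\<dots> \<le> real C * r" using C rp by (simp add: mult_right_mono)
          finally have "real n * \<eta> \<le> real C * r" .
          moreover have "real N * \<eta> \<le> real n * \<eta>" using nN etap by (simp add: mult_right_mono)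
          ultimately show False using NN by simp
        qed
        have "supn (v n) \<le> e" using small vnn by (intro supn_le) (simp add: abs_of_nonneg less_imp_le)
        moreover have "0 \<le> supn (v n)" using supn_nonneg[OF vl] .
        ultimately show "norm (supn (v n) - 0) < \<epsilon>" using e_def ep by simp
      qed
    qed
    then show ?thesis by (simp add: v_def)
  qed
  have "GATT T'"
    unfolding GATT_def
  proof
    fix s :: "'i \<Rightarrow> real" assume s: "s \<in> linf_pos"
    obtain t where t: "t \<in> Psi T" "\<forall>i. s i \<le> t i" using cof s by blast
    have tl: "t \<in> linf_pos" using t unfolding Psi_def by auto
    show "(\<lambda>n. supn ((T' ^^ n) s)) \<longlonglongrightarrow> 0"
    proof (rule tendsto_sandwich[of "\<lambda>n. 0" _ _ "\<lambda>n. supn ((T' ^^ n) t)"])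
      show "\<forall>\<^sub>F n in sequentially. 0 \<le> supn ((T' ^^ n) s)"
        using supn_nonneg[OF it_lin[OF s]] by simp
      show "\<forall>\<^sub>F n in sequentially. supn ((T' ^^ n) s) \<le> supn ((T' ^^ n) t)"
      proof (rule always_eventually, rule allI)
        fix n
        show "supn ((T' ^^ n) s) \<le> supn ((T' ^^ n) t)"
          using it_lin[OF s, of n] it_mono[OF s tl t(2), of n] it_lin[OF tl, of n]
          by (intro supn_mono) (auto simp: linf_pos_def)
      qed
      show "(\<lambda>n. 0) \<longlonglongrightarrow> (0::real)" by simp
      show "(\<lambda>n. supn ((T' ^^ n) t)) \<longlonglongrightarrow> 0" using conv[OF t(1)] .
    qed
  qed
  then show ?thesis using Kr' unfolding T'_def by blast
qed

end
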